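(* Let $p$ be a prime, $K\in\{\mathbb Z_{(p)},\mathbb Z_p\}$, $F$ a field containing $K$, $G=\langle a\rangle\cong C_{p^2}$, $\Phi(x)=x^{p-1}+\dots+x+1$, and for $0\leq i\leq p-2$ let $X_i$ be the $KC_{p^2}$-submodule of $KC_{p^2}$ generated by $(a-1)\Phi(a^p)$ and $\Phi(a)+(a-1)^{i+1}$. Let $T_i:C_{p^2}\to\widehat{X_i}$ be the cocycle with $T_i(a)=p^{-2}\Phi(a)\Phi(a^p)+X_i$. Then $\mathrm{Crys}(C_{p^2};X_i;T_i)$ is torsion-free.
   Context: $FM=F\otimes_KM$, $\widehat M=FM/M$ with $g(x+M)=gx+M$; a $1$-cocycle is $T:G\to\widehat M$ with $T(gh)=gT(h)+T(g)$, determined for cyclic $G$ by $T(a)$ via $T(a^k)=(1+a+\dots+a^{k-1})T(a)$. $\mathrm{Crys}(G;M;T)=\{(g,x):g\in G,\ x\in FM,\ x+M=T(g)\}$ with $(g,x)(g',x')=(gg',g'x+x')$. *)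

theory Defs
  imports Complex_Main "HOL-Computational_Algebra.Primes"
begin

text \<open>The cyclic group C_N = <a> is represented by exponents k in {0..<N} (a^k).
  Elements of the group algebra R C_N are functions nat => R, with x j the
  coefficient of a^j, and x j = 0 for j >= N.\<close>

definition grp :: "nat \<Rightarrow> nat \<Rightarrow> nat \<Rightarrow> 'f::comm_ring_1" where
  "grp N k = (\<lambda>j. if j = k mod N then 1 else 0)"

definition conv :: "nat \<Rightarrow> (nat \<Rightarrow> 'f::comm_ring_1) \<Rightarrow> (nat \<Rightarrow> 'f) \<Rightarrow> nat \<Rightarrow> 'f" where
  "conv N x y = (\<lambda>j. if j < N then (\<Sum>k<N. x k * y ((j + N - k) mod N)) else 0)"

fun cpow :: "nat \<Rightarrow> (nat \<Rightarrow> 'f::comm_ring_1) \<Rightarrow> nat \<Rightarrow> nat \<Rightarrow> 'f" where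
  "cpow N x 0 = grp N 0"
| "cpow N x (Suc n) = conv N x (cpow N x n)"

definition act :: "nat \<Rightarrow> nat \<Rightarrow> (nat \<Rightarrow> 'f::comm_ring_1) \<Rightarrow> nat \<Rightarrow> 'f" where
  "act N k x = conv N (grp N k) x"

definition grp_alg :: "nat \<Rightarrow> 'f::comm_ring_1 set \<Rightarrow> (nat \<Rightarrow> 'f) set" where
  "grp_alg N K = {x. (\<forall>j. x j \<in> K) \<and> (\<forall>j\<ge>N. x j = 0)}"

definition gen_submodule :: "nat \<Rightarrow> 'f::comm_ring_1 set \<Rightarrow> (nat \<Rightarrow> 'f) \<Rightarrow> (nat \<Rightarrow> 'f) \<Rightarrow> (nat \<Rightarrow> 'f) set" where
  "gen_submodule N K u v =
     {(\<lambda>j. conv N r u j + conv N s v j) | r s. r \<in> grp_alg N K \<and> s \<in> grp_alg N K}"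

text \<open>FM = F \<otimes>_K M, realised as the F-linear span of M inside F C_N\<close>
definition F_span :: "(nat \<Rightarrow> 'f::field) set \<Rightarrow> (nat \<Rightarrow> 'f) set" where
  "F_span M = {x. \<exists>(n::nat) c m. (\<forall>i<n. m i \<in> M) \<and> x = (\<lambda>j. \<Sum>i<n. c i * m i j)}"

definition Phi_a :: "nat \<Rightarrow> nat \<Rightarrow> 'f::comm_ring_1" where
  "Phi_a p = (\<lambda>j. \<Sum>l<p. grp (p^2) l j)"

definition Phi_ap :: "nat \<Rightarrow> nat \<Rightarrow> 'f::comm_ring_1" where
  "Phi_ap p = (\<lambda>j. \<Sum>l<p. grp (p^2) (p * l) j)"

definition a_minus_1 :: "nat \<Rightarrow> nat \<Rightarrow> 'f::comm_ring_1" where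
  "a_minus_1 N = (\<lambda>j. grp N 1 j - grp N 0 j)"

definition X_mod :: "nat \<Rightarrow> 'f::comm_ring_1 set \<Rightarrow> nat \<Rightarrow> (nat \<Rightarrow> 'f) set" where
  "X_mod p K i = gen_submodule (p^2) K
      (conv (p^2) (a_minus_1 (p^2)) (Phi_ap p))
      (\<lambda>j. Phi_a p j + cpow (p^2) (a_minus_1 (p^2)) (i + 1) j)"

definition T_a :: "nat \<Rightarrow> nat \<Rightarrow> 'f::field" where
  "T_a p = (\<lambda>j. conv (p^2) (Phi_a p) (Phi_ap p) j / (of_nat p)^2)"

definition T_val :: "nat \<Rightarrow> nat \<Rightarrow> nat \<Rightarrow> 'f::field" where
  "T_val p k = (\<lambda>j. \<Sum>l<k. act (p^2) l (T_a p) j)"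

text \<open>Crys(C_N; M; T) where t k is a representative in FM of T(a^k)\<close>
definition crys :: "nat \<Rightarrow> (nat \<Rightarrow> 'f::field) set \<Rightarrow> (nat \<Rightarrow> nat \<Rightarrow> 'f) \<Rightarrow> (nat \<times> (nat \<Rightarrow> 'f)) set" where
  "crys N M t = {(k, x). k < N \<and> x \<in> F_span M \<and> (\<lambda>j. x j - t k j) \<in> M}"

definition crys_mult :: "nat \<Rightarrow> nat \<times> (nat \<Rightarrow> 'f::comm_ring_1) \<Rightarrow> nat \<times> (nat \<Rightarrow> 'f) \<Rightarrow> nat \<times> (nat \<Rightarrow> 'f)" where
  "crys_mult N e e' = ((fst e + fst e') mod N, (\<lambda>j. act N (fst e') (snd e) j + snd e' j))"

fun crys_pow :: "nat \<Rightarrow> nat \<times> (nat \<Rightarrow> 'f::comm_ring_1) \<Rightarrow> nat \<Rightarrow> nat \<times> (nat \<Rightarrow> 'f)" where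
  "crys_pow N e 0 = (0, (\<lambda>_. 0))"
| "crys_pow N e (Suc n) = crys_mult N (crys_pow N e n) e"

definition torsion_free_crys :: "nat \<Rightarrow> (nat \<times> (nat \<Rightarrow> 'f::comm_ring_1)) set \<Rightarrow> bool" where
  "torsion_free_crys N S \<longleftrightarrow>
     (\<forall>e\<in>S. \<forall>n>0. crys_pow N e n = (0, (\<lambda>_. 0)) \<longrightarrow> e = (0, (\<lambda>_. 0)))"

definition Zloc :: "nat \<Rightarrow> rat set" where
  "Zloc p = {q. \<not> int p dvd snd (quotient_of q)}"

definition padic_ints :: "nat \<Rightarrow> (nat \<Rightarrow> int) set" where
  "padic_ints p = {x. \<forall>n. 0 \<le> x n \<and> x n < int p ^ n \<and> x n = x (Suc n) mod int p ^ n}"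

definition padd :: "nat \<Rightarrow> (nat \<Rightarrow> int) \<Rightarrow> (nat \<Rightarrow> int) \<Rightarrow> nat \<Rightarrow> int" where
  "padd p x y = (\<lambda>n. (x n + y n) mod int p ^ n)"

definition pmult :: "nat \<Rightarrow> (nat \<Rightarrow> int) \<Rightarrow> (nat \<Rightarrow> int) \<Rightarrow> nat \<Rightarrow> int" where
  "pmult p x y = (\<lambda>n. (x n * y n) mod int p ^ n)"

definition pone :: "nat \<Rightarrow> nat \<Rightarrow> int" where
  "pone p = (\<lambda>n. 1 mod int p ^ n)"

definition padic_embedding :: "nat \<Rightarrow> ((nat \<Rightarrow> int) \<Rightarrow> 'f::field) \<Rightarrow> bool" where
  "padic_embedding p \<phi> \<longleftrightarrow> inj_on \<phi> (padic_ints p) \<and> \<phi> (pone p) = 1 \<and>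
     (\<forall>x\<in>padic_ints p. \<forall>y\<in>padic_ints p.
        \<phi> (padd p x y) = \<phi> x + \<phi> y \<and> \<phi> (pmult p x y) = \<phi> x * \<phi> y)"

end

theory Submission
  imports Defs "HOL-Computational_Algebra.Polynomial"
begin

definition ev :: "nat \<Rightarrow> 'f::comm_ring_1 poly \<Rightarrow> nat \<Rightarrow> 'f" where
  "ev N A = (\<lambda>j. \<Sum>k\<le>degree A. coeff A k * grp N k j)"

lemma ev_bound:
  assumes "degree A < D"
  shows "ev N A j = (\<Sum>k<D. coeff A k * grp N k j)"
proof -
  have "(\<Sum>k<D. coeff A k * grp N k j) = (\<Sum>k\<le>degree A. coeff A k * grp N k j)"
    by (rule sum.mono_neutral_right) (use assms in \<open>auto simp: coeff_eq_0\<close>)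
  then show ?thesis by (simp add: ev_def)
qed

lemma ev_add: "ev N (A + B) j = ev N A j + ev N B j"
proof -
  define D where "D = Suc (max (degree A) (degree B))"
  have "degree (A+B) < D" unfolding D_def using degree_add_le_max[of A B] by simp
  moreover have "degree A < D" "degree B < D" unfolding D_def by auto
  ultimately show ?thesis by (simp add: ev_bound[of _ D] algebra_simps sum.distrib)
qed

lemma ev_uminus: "ev N (- A) j = - ev N A j"
  by (simp add: ev_def sum_negf)

lemma ev_diff: "ev N (A - B) j = ev N A j - ev N B j"
  using ev_add[of N A "-B" j] by (simp add: ev_uminus)

lemma ev_0: "ev N 0 j = 0"
  by (simp add: ev_def)

lemma ev_smult: "ev N (smult c A) j = c * ev N A j"
proof -
  have "degree (smult c A) < Suc (degree A)" using degree_smult_le[of c A] by simp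
  then show ?thesis by (simp add: ev_bound[of _ "Suc (degree A)"] sum_distrib_left mult.assoc del: sum.lessThan_Suc)
qed

lemma ev_sum: "finite I \<Longrightarrow> ev N (\<Sum>i\<in>I. f i) j = (\<Sum>i\<in>I. ev N (f i) j)"
  by (induction I rule: finite_induct) (simp_all add: ev_0 ev_add)

lemma ev_monom: "ev N (monom c k) j = c * grp N k j"
proof -
  have "degree (monom c k) < Suc k" using degree_monom_le[of c k] by linarith
  then have "ev N (monom c k) j = (\<Sum>m<Suc k. coeff (monom c k) m * grp N m j)" by (rule ev_bound)
  also have "\<dots> = c * grp N k j"
    by (simp add: coeff_monom sum.delta' lessThan_Suc)
  finally show ?thesis .
qed

lemma conv_sum_left: "finite I \<Longrightarrow> conv N (\<lambda>j. \<Sum>m\<in>I. f m j) y j' = (\<Sum>m\<in>I. conv N (f m) y j')"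
  by (simp add: conv_def sum_distrib_right sum.swap[of _ I])

lemma conv_sum_right: "finite I \<Longrightarrow> conv N y (\<lambda>j. \<Sum>m\<in>I. f m j) j' = (\<Sum>m\<in>I. conv N y (f m) j')"
  by (simp add: conv_def sum_distrib_left sum.swap[of _ I])

lemma conv_scale_left: "conv N (\<lambda>j. c * x j) y j' = c * conv N x y j'"
  by (simp add: conv_def sum_distrib_left mult.assoc)

lemma conv_scale_right: "conv N y (\<lambda>j. c * x j) j' = c * conv N y x j'"
  by (simp add: conv_def sum_distrib_left algebra_simps)

lemma mod_2N: "(a::nat) < 2*N \<Longrightarrow> b < N \<Longrightarrow> (a mod N = b) = (a = b \<or> a = b + N)"
  by (cases "a < N") (auto simp: le_mod_geq)

lemma grp_conv: assumes "N > 0" shows "conv N (grp N m) (grp N l) j = grp N (m + l) j"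
proof (cases "j < N")
  case True
  have "conv N (grp N m) (grp N l) j = (\<Sum>k<N. (if k = m mod N then 1 else 0) * grp N l ((j + N - k) mod N))"
    using True by (simp add: conv_def grp_def)
  also have "\<dots> = grp N l ((j + N - m mod N) mod N)"
    using assms by (simp add: sum.delta' if_distrib[of "\<lambda>x. x * _"] cong: if_cong)
  also have "\<dots> = grp N (m+l) j"
  proof -
    have m: "m mod N < N" "l mod N < N" using assms by auto
    have "((j + N - m mod N) mod N = l mod N) = (j = (m + l) mod N)"
    proof -
      have L: "((j + N - m mod N) mod N = l mod N) = (j + N - m mod N = l mod N \<or> j + N - m mod N = l mod N + N)"
        by (rule mod_2N) (use m True in auto)
      have R: "((m mod N + l mod N) mod N = j) = (m mod N + l mod N = j \<or> m mod N + l mod N = j + N)"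
        by (rule mod_2N) (use m True in linarith)+
      have "(j = (m + l) mod N) = ((m mod N + l mod N) mod N = j)" by (auto simp: mod_add_eq)
      then show ?thesis using L R m True by linarith
    qed
    then show ?thesis by (simp add: grp_def)
  qed
  finally show ?thesis .
next
  case False
  then show ?thesis using assms mod_less_divisor[OF assms, of "m+l"] by (auto simp: conv_def grp_def)
qed

lemma ev_mult: assumes "N > 0" shows "conv N (ev N A) (ev N B) j = ev N (A * B) j"
proof -
  have "conv N (ev N A) (ev N B) j =
     (\<Sum>k\<le>degree A. \<Sum>l\<le>degree B. coeff A k * coeff B l * grp N (k + l) j)"
    unfolding ev_def
    by (simp add: conv_sum_left conv_sum_right conv_scale_left conv_scale_right grp_conv[OF assms]
         sum_distrib_left mult.assoc)
  also have "\<dots> = ev N (\<Sum>k\<le>degree A. \<Sum>l\<le>degree B. monom (coeff A k * coeff B l) (k + l)) j"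
    by (simp add: ev_sum ev_monom)
  also have "(\<Sum>k\<le>degree A. \<Sum>l\<le>degree B. monom (coeff A k * coeff B l) (k + l)) = A * B"
  proof -
    have "A * B = (\<Sum>k\<le>degree A. monom (coeff A k) k) * (\<Sum>l\<le>degree B. monom (coeff B l) l)"
      by (simp add: poly_as_sum_of_monoms)
    also have "\<dots> = (\<Sum>k\<le>degree A. \<Sum>l\<le>degree B. monom (coeff A k * coeff B l) (k + l))"
      by (simp add: sum_product mult_monom)
    finally show ?thesis by simp
  qed
  finally show ?thesis .
qed

abbreviation QQ :: "nat \<Rightarrow> 'f::comm_ring_1 poly" where "QQ N \<equiv> monom 1 N - 1"

lemma ev_1: "ev N 1 j = grp N 0 j"
  using ev_monom[of N 1 0 j] by (simp add: monom_0 one_pCons)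

lemma ev_QQ: assumes "N > 0" shows "ev N (QQ N) j = 0"
  using assms by (simp add: ev_diff ev_monom ev_1 grp_def)

lemma conv_zero_left: "conv N (\<lambda>_. 0) y j = 0"
  by (simp add: conv_def)

lemma dvd_ev0: assumes "N > 0" "QQ N dvd A" shows "ev N A j = 0"
proof -
  obtain C where "A = QQ N * C" using assms(2) by blast
  then have "ev N A j = conv N (ev N (QQ N)) (ev N C) j" by (simp add: ev_mult[OF assms(1)])
  also have "ev N (QQ N) = (\<lambda>_. 0)" using ev_QQ[OF assms(1)] by auto
  finally show ?thesis by (simp add: conv_zero_left)
qed

lemma degree_QQ: assumes "N > 0" shows "degree (QQ N :: 'f::comm_ring_1 poly) = N"
proof -
  have "QQ N = monom (1::'f) N + (- 1)" by simp
  also have "degree \<dots> = N"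
    using assms by (subst degree_add_eq_left) (auto simp: degree_monom_eq)
  finally show ?thesis .
qed

lemma ev_small: assumes "degree A < N" "j < N" shows "ev N A j = coeff A j"
proof -
  have "ev N A j = (\<Sum>k<N. coeff A k * grp N k j)" by (rule ev_bound[OF assms(1)])
  also have "\<dots> = (\<Sum>k<N. if k = j then coeff A k else 0)"
    by (rule sum.cong) (use assms in \<open>auto simp: grp_def\<close>)
  also have "\<dots> = coeff A j" using assms by simp
  finally show ?thesis .
qed

lemma ev0_dvd: fixes A :: "'f::field poly"
  assumes "N > 0" "\<And>j. ev N A j = 0" shows "QQ N dvd A"
proof -
  define R where "R = A mod QQ N"
  have A: "A = QQ N * (A div QQ N) + R" unfolding R_def by simp
  have evR: "ev N R j = 0" for j
  proof -
    have "ev N A j = ev N (QQ N * (A div QQ N)) j + ev N R j" by (subst A) (simp add: ev_add)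
    then show ?thesis using assms dvd_ev0[OF assms(1), of "QQ N * (A div QQ N)" j] by simp
  qed
  have "R = 0"
  proof (rule ccontr)
    assume "R \<noteq> 0"
    have Q0: "QQ N \<noteq> (0::'f poly)" using degree_QQ[OF assms(1), where 'f='f] assms(1) by auto
    have dR: "degree R < N" using degree_mod_less'[OF Q0 \<open>R \<noteq> 0\<close>[unfolded R_def]] degree_QQ[OF assms(1), where 'f='f]
      unfolding R_def by simp
    have "coeff R j = 0" for j
    proof (cases "j < N")
      case True then show ?thesis using ev_small[OF dR True] evR by simp
    next
      case False then show ?thesis using dR by (simp add: coeff_eq_0)
    qed
    then have "R = 0" by (simp add: poly_eq_iff)
    then show False using \<open>R \<noteq> 0\<close> by simp
  qed
  then show ?thesis unfolding R_def by (simp add: mod_0_imp_dvd)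
qed


definition PhiP :: "nat \<Rightarrow> nat \<Rightarrow> 'f::comm_ring_1 poly" where
  "PhiP d m = (\<Sum>l<m. monom 1 (d*l))"

lemma tele: "(monom 1 d - 1) * PhiP d m = (monom 1 (d*m) - 1 :: 'f::comm_ring_1 poly)"
proof (induction m)
  case 0 then show ?case by (simp add: PhiP_def)
next
  case (Suc m)
  have "(monom 1 d - 1) * PhiP d (Suc m) = (monom 1 d - 1) * PhiP d m + (monom 1 d - 1) * monom (1::'f) (d*m)"
    by (simp add: PhiP_def algebra_simps)
  also have "\<dots> = monom 1 (d*Suc m) - 1"
    using Suc by (simp add: algebra_simps mult_monom)
  finally show ?case .
qed

lemma tele_dvd: "(monom 1 d - 1 :: 'f::comm_ring_1 poly) dvd (monom 1 (d*m) - 1)"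
  using tele[of d m, where 'f='f] by (metis dvd_triv_left)

definition cg :: "'f::comm_ring_1 poly \<Rightarrow> 'f poly \<Rightarrow> 'f poly \<Rightarrow> bool" where
  "cg M A B \<longleftrightarrow> M dvd (A - B)"

lemma cg_refl: "cg M A A" by (simp add: cg_def)
lemma cg_eq: "A = B \<Longrightarrow> cg M A B" by (simp add: cg_def)
lemma cg_sym: "cg M A B \<Longrightarrow> cg M B A" unfolding cg_def by (metis dvd_minus_iff minus_diff_eq)
lemma cg_trans[trans]: "cg M A B \<Longrightarrow> cg M B C \<Longrightarrow> cg M A C"
  unfolding cg_def using dvd_add[of M "A - B" "B - C"] by simp
lemma cg_eq_trans[trans]: "A = B \<Longrightarrow> cg M B C \<Longrightarrow> cg M A C" by simp
lemma cg_trans_eq[trans]: "cg M A B \<Longrightarrow> B = C \<Longrightarrow> cg M A C" by simp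
lemma cg_add: "cg M A B \<Longrightarrow> cg M C D \<Longrightarrow> cg M (A + C) (B + D)"
  unfolding cg_def using dvd_add[of M "A - B" "C - D"] by (simp add: algebra_simps)
lemma cg_diff: "cg M A B \<Longrightarrow> cg M C D \<Longrightarrow> cg M (A - C) (B - D)"
  unfolding cg_def using dvd_diff[of M "A - B" "C - D"] by (simp add: algebra_simps)
lemma cg_mult_left: "cg M A B \<Longrightarrow> cg M (C * A) (C * B)"
  unfolding cg_def by (metis dvd_mult right_diff_distrib)
lemma cg_mult_right: "cg M A B \<Longrightarrow> cg M (A * C) (B * C)"
  using cg_mult_left[of M A B C] by (simp add: mult.commute)
lemma cg_smult: "cg M A B \<Longrightarrow> cg M (smult c A) (smult c B)"
  using cg_mult_left[of M A B "[:c:]"] by simp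
lemma cg_sum: "(\<And>l. l \<in> I \<Longrightarrow> cg M (f l) (g l)) \<Longrightarrow> cg M (\<Sum>l\<in>I. f l) (\<Sum>l\<in>I. g l)"
proof (induction I rule: infinite_finite_induct)
  case (insert x F) then show ?case by (simp add: cg_add)
qed (simp_all add: cg_refl)

lemma cg_dvd: "M dvd A \<Longrightarrow> cg M A 0" by (simp add: cg_def)
lemma cg_0_dvd: "cg M A 0 \<Longrightarrow> M dvd A" by (simp add: cg_def)

abbreviation YY :: "'f::comm_ring_1 poly" where "YY \<equiv> monom 1 1 - 1"

lemma YY_pCons: "(YY :: 'f::comm_ring_1 poly) = [:-1, 1:]"
  by (simp add: poly_eq_iff coeff_monom coeff_pCons split: nat.split)

lemma L1: "(YY :: 'f::comm_ring_1 poly) * (PhiP 1 p * PhiP p p) = QQ (p*p)"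
proof -
  have "(YY :: 'f poly) * (PhiP 1 p * PhiP p p) = (YY * PhiP 1 p) * PhiP p p" by (simp add: mult.assoc)
  also have "\<dots> = (monom 1 p - 1) * PhiP p p" using tele[of 1 p, where 'f='f] by simp
  also have "\<dots> = QQ (p*p)" by (rule tele)
  finally show ?thesis .
qed

lemma L2: "cg (QQ (p*p)) (monom 1 l * (PhiP 1 p * PhiP p p)) ((PhiP 1 p * PhiP p p) :: 'f::comm_ring_1 poly)"
proof -
  obtain t where t: "(monom 1 (1*l) - 1 :: 'f poly) = YY * t" using tele_dvd[of 1 l, where 'f='f] by (elim dvdE)
  define X where "X = (PhiP 1 p * PhiP p p :: 'f poly)"
  have "monom 1 l * X - X = (monom 1 (1*l) - 1) * X"
    by (simp add: algebra_simps)
  also have "\<dots> = (YY * t) * X" by (simp only: t)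
  also have "\<dots> = t * (YY * X)" by (simp only: mult_ac)
  also have "\<dots> = t * QQ (p*p)" unfolding X_def by (simp only: L1)
  finally show ?thesis unfolding cg_def X_def by simp
qed

lemma L3: "cg (QQ (p*p)) (monom 1 (p*l) * PhiP p p) (PhiP p p :: 'f::comm_ring_1 poly)"
proof -
  obtain t where t: "(monom 1 (p*l) - 1 :: 'f poly) = (monom 1 p - 1) * t" using tele_dvd[of p l, where 'f='f] by (elim dvdE)
  have "monom 1 (p*l) * PhiP p p - PhiP p p = (monom 1 (p*l) - 1) * (PhiP p (p::nat) :: 'f poly)"
    by (simp add: algebra_simps)
  also have "\<dots> = t * QQ (p*p)" using tele[of p p, where 'f='f] by (simp add: t mult.assoc mult.left_commute)
  finally show ?thesis unfolding cg_def by simp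
qed

lemma L4: "cg (QQ (p*p)) (PhiP p p * PhiP p p) (smult (of_nat p) (PhiP p p :: 'f::comm_ring_1 poly))"
proof -
  have "PhiP p p * PhiP p p = (\<Sum>l<p. monom 1 (p*l) * (PhiP p p :: 'f poly))"
    by (simp add: PhiP_def sum_distrib_right)
  also have "cg (QQ (p*p)) \<dots> (\<Sum>l<p. PhiP p p)" by (rule cg_sum) (rule L3)
  also have "(\<Sum>l<p. PhiP p p) = smult (of_nat p) (PhiP p p :: 'f poly)"
    by (simp add: of_nat_poly)
  finally show ?thesis .
qed

lemma L5: "cg (QQ (p*p)) ((PhiP 1 p * PhiP p p) * A) (smult (poly A 1) (PhiP 1 p * PhiP p p :: 'f::comm_ring_1 poly))"
proof -
  have "poly (A - [:poly A 1:]) 1 = 0" by simp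
  then obtain t where t: "A - [:poly A 1:] = YY * t" unfolding poly_eq_0_iff_dvd YY_pCons by (elim dvdE) simp
  have "(PhiP 1 p * PhiP p p) * A - smult (poly A 1) (PhiP 1 p * PhiP p p) = (PhiP 1 p * PhiP p p) * (A - [:poly A 1:])"
    by (simp add: algebra_simps)
  also have "\<dots> = t * QQ (p*p)" using L1[of p, where 'f='f] by (simp add: t mult.assoc mult.left_commute mult.commute)
  finally show ?thesis unfolding cg_def by (metis dvd_triv_right)
qed

lemma L6: "PhiP 1 p * PhiP p p = (PhiP 1 (p*p) :: 'f::idom poly)"
proof -
  have "(YY :: 'f poly) * (PhiP 1 p * PhiP p p) = YY * PhiP 1 (p*p)"
    using L1[of p, where 'f='f] tele[of 1 "p*p", where 'f='f] by simp
  moreover have "(YY :: 'f poly) \<noteq> 0" by (subst YY_pCons) simp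
  ultimately show ?thesis by simp
qed

lemma L7: assumes "N > 0" shows "ev N (PhiP 1 N :: 'f::comm_ring_1 poly) 0 = 1"
proof -
  have "ev N (PhiP 1 N :: 'f poly) 0 = (\<Sum>l<N. grp N l 0)"
    by (simp add: PhiP_def ev_sum ev_monom)
  also have "\<dots> = (\<Sum>l<N. if l = 0 then 1 else 0)"
    by (rule sum.cong) (auto simp: grp_def)
  also have "\<dots> = 1" using assms by simp
  finally show ?thesis .
qed

lemma L8: "poly (PhiP d m :: 'f::comm_ring_1 poly) 1 = of_nat m"
  by (simp add: PhiP_def poly_sum poly_monom)

lemma binom_cong: assumes "prime p" "l < p" shows "int p dvd (int ((p-1) choose l) - (-1)^l)"
  using assms(2)
proof (induction l)
  case 0 then show ?case by simp
next
  case (Suc l)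
  have p0: "p \<noteq> 0" using assms(1) by auto
  have "p choose Suc l = ((p-1) choose l) + ((p-1) choose Suc l)"
    using binomial_Suc_Suc[of "p-1" l] p0 by simp
  moreover have "p dvd (p choose Suc l)" using dvd_choose_prime[OF Suc.prems _ p0 assms(1)] by simp
  ultimately have "int p dvd int ((p-1) choose l) + int ((p-1) choose Suc l)"
    by (metis int_dvd_int_iff of_nat_add)
  moreover have "int p dvd (int ((p-1) choose l) - (-1)^l)" using Suc by simp
  ultimately have "int p dvd (int ((p-1) choose l) + int ((p-1) choose Suc l)) - (int ((p-1) choose l) - (-1)^l)"
    by (rule dvd_diff)
  then show ?case by simp
qed

lemma binom_cong2: assumes "prime p" "l < p" shows "int p dvd (1 - int ((p-1) choose l) * (-1)^(p-1-l))"
proof -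
  have a: "int p dvd (1 - (-1)^(p-1))"
  proof (cases "p = 2")
    case True then show ?thesis by simp
  next
    case False
    then have "odd p" using assms(1) prime_odd_nat prime_ge_2_nat[OF assms(1)] by force
    then have "even (p-1)" using assms(1) prime_gt_0_nat by auto
    then show ?thesis by simp
  qed
  have e: "((-1::int)^(p-1-l)) * (-1)^l = (-1)^(p-1)"
    using assms(2) by (simp add: power_add[symmetric])
  have "1 - int ((p-1) choose l) * (-1)^(p-1-l) = (1 - (-1)^(p-1)) - (-1)^(p-1-l) * (int ((p-1) choose l) - (-1)^l)"
    using e by (simp add: algebra_simps)
  then show ?thesis using a binom_cong[OF assms] by (metis dvd_diff dvd_mult)
qed

lemma neg1_pow_poly: "(-1::'f::comm_ring_1 poly)^m = smult ((-1)^m) 1"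
  by (induction m) auto

lemma smult_sum_right: "smult a (\<Sum>l\<in>S. f l) = (\<Sum>l\<in>S. smult a (f l))"
  by (induction S rule: infinite_finite_induct) (simp_all add: smult_add_right)

lemma Ypow: assumes "prime p"
  shows "\<exists>c::nat\<Rightarrow>int. (YY::'f::comm_ring_1 poly)^(p-1) = PhiP 1 p - smult (of_nat p) (\<Sum>l<p. monom (of_int (c l)) l)"
proof -
  define b where "b l = int ((p-1) choose l) * (-1)^(p-1-l)" for l
  define c where "c l = (1 - b l) div int p" for l
  have cb: "int p * c l = 1 - b l" if "l < p" for l
    using binom_cong2[OF assms that] unfolding c_def b_def by simp
  have p1: "{..p-1} = {..<p}" using prime_gt_0_nat[OF assms] by auto
  have "(YY::'f poly)^(p-1) = (monom 1 1 + (-1))^(p-1)" by simp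
  also have "\<dots> = (\<Sum>k\<le>p-1. of_nat ((p-1) choose k) * (monom 1 1)^k * (-1)^(p-1-k))"
    by (rule binomial_ring)
  also have "\<dots> = (\<Sum>k<p. monom (of_int (b k)) k)"
    unfolding p1 b_def
    by (rule sum.cong) (simp_all add: monom_power of_nat_poly smult_monom neg1_pow_poly mult.commute)
  also have "\<dots> = PhiP 1 p - smult (of_nat p) (\<Sum>l<p. monom (of_int (c l)) l)"
  proof -
    have "PhiP 1 p - smult (of_nat p) (\<Sum>l<p. monom (of_int (c l)) l) = (\<Sum>l<p. monom (1 - of_int (int p * c l)) l :: 'f poly)"
    proof -
      have "smult (of_nat p) (\<Sum>l<p. monom (of_int (c l)) l) = (\<Sum>l<p. monom (of_nat p * of_int (c l)) l :: 'f poly)"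
        by (simp add: smult_sum_right smult_monom)
      then show ?thesis by (simp add: PhiP_def sum_subtractf[symmetric] diff_monom)
    qed
    also have "\<dots> = (\<Sum>k<p. monom (of_int (b k)) k)"
      by (rule sum.cong) (simp_all add: cb)
    finally show ?thesis by simp
  qed
  finally show ?thesis by blast
qed


definition goodK :: "nat \<Rightarrow> 'f::field set \<Rightarrow> bool" where
  "goodK p K \<longleftrightarrow> 1 \<in> K \<and> (\<forall>a\<in>K. \<forall>b\<in>K. a + b \<in> K \<and> a * b \<in> K) \<and> (\<forall>a\<in>K. - a \<in> K)
     \<and> (\<forall>c \<kappa>. \<kappa> \<in> K \<longrightarrow> of_nat c = of_nat p * \<kappa> \<longrightarrow> p dvd c)"

definition KP :: "'f::field set \<Rightarrow> 'f poly \<Rightarrow> bool" where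
  "KP K A \<longleftrightarrow> (\<forall>i. coeff A i \<in> K)"

context fixes p :: nat and K :: "'f::field set" assumes gK: "goodK p K"
begin

lemma K1: "1 \<in> K" using gK by (simp add: goodK_def)
lemma Kadd: "a \<in> K \<Longrightarrow> b \<in> K \<Longrightarrow> a + b \<in> K" using gK by (simp add: goodK_def)
lemma Kmult: "a \<in> K \<Longrightarrow> b \<in> K \<Longrightarrow> a * b \<in> K" using gK by (simp add: goodK_def)
lemma Kneg: "a \<in> K \<Longrightarrow> - a \<in> K" using gK by (simp add: goodK_def)
lemma Kdiff: "a \<in> K \<Longrightarrow> b \<in> K \<Longrightarrow> a - b \<in> K" using Kadd[of a "-b"] Kneg[of b] by simp
lemma K0: "0 \<in> K" using Kdiff[OF K1 K1] by simp
lemma Kint: "p dvd c" if "\<kappa> \<in> K" "of_nat c = of_nat p * \<kappa>" using gK that by (simp add: goodK_def)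
lemma Ksum: "(\<And>i. i \<in> I \<Longrightarrow> f i \<in> K) \<Longrightarrow> (\<Sum>i\<in>I. f i) \<in> K"
  by (induction I rule: infinite_finite_induct) (auto simp: K0 Kadd)
lemma Knat: "of_nat n \<in> K" by (induction n) (auto simp: K0 K1 Kadd)
lemma Kint': "of_int z \<in> K"
proof (cases "z \<ge> 0")
  case True then show ?thesis using Knat[of "nat z"] by simp
next
  case False then show ?thesis using Kneg[OF Knat[of "nat (-z)"]] by simp
qed
lemma Kpow: "a \<in> K \<Longrightarrow> a ^ n \<in> K" by (induction n) (auto simp: K1 Kmult)

lemma KP_add: "KP K A \<Longrightarrow> KP K B \<Longrightarrow> KP K (A + B)" by (simp add: KP_def Kadd)
lemma KP_diff: "KP K A \<Longrightarrow> KP K B \<Longrightarrow> KP K (A - B)" by (simp add: KP_def Kdiff)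
lemma KP_mult: "KP K A \<Longrightarrow> KP K B \<Longrightarrow> KP K (A * B)"
  by (simp add: KP_def coeff_mult Ksum Kmult)
lemma KP_monom: "c \<in> K \<Longrightarrow> KP K (monom c n)" by (simp add: KP_def coeff_monom K0)
lemma KP_1: "KP K 1" using KP_monom[OF K1, of 0] by (simp add: monom_0 one_pCons)
lemma KP_pow: "KP K A \<Longrightarrow> KP K (A ^ n)" by (induction n) (auto simp: KP_1 KP_mult)
lemma KP_sum: "(\<And>i. i \<in> I \<Longrightarrow> KP K (f i)) \<Longrightarrow> KP K (\<Sum>i\<in>I. f i)"
  by (simp add: KP_def coeff_sum Ksum)
lemma KP_smult: "c \<in> K \<Longrightarrow> KP K A \<Longrightarrow> KP K (smult c A)" by (simp add: KP_def Kmult)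
lemma KP_YY: "KP K YY" by (intro KP_diff KP_monom KP_1 K1)
lemma KP_PhiP: "KP K (PhiP d m)" unfolding PhiP_def by (intro KP_sum KP_monom K1)
lemma KP_poly1: "KP K A \<Longrightarrow> poly A 1 \<in> K" by (simp add: poly_altdef KP_def Ksum)
lemma KP_ev: "KP K A \<Longrightarrow> ev N A j \<in> K"
  unfolding ev_def KP_def by (intro Ksum Kmult) (auto simp: grp_def K0 K1)

end


fun Cs :: "nat \<Rightarrow> 'f::comm_ring_1 poly \<Rightarrow> nat \<Rightarrow> 'f poly" where
  "Cs k X 0 = 0"
| "Cs k X (Suc n) = monom 1 k * Cs k X n + X"

lemma Cs_cg: assumes "cg Q (monom 1 k * M) M"
  shows "cg Q (M * Cs k X n) (smult (of_nat n) (M * X))"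
proof (induction n)
  case 0 then show ?case by (simp add: cg_refl)
next
  case (Suc n)
  have "M * Cs k X (Suc n) = monom 1 k * (M * Cs k X n) + M * X" by (simp add: algebra_simps)
  also have "cg Q \<dots> (monom 1 k * smult (of_nat n) (M * X) + M * X)"
    by (intro cg_add cg_mult_left Suc cg_refl)
  also have "monom 1 k * smult (of_nat n) (M * X) + M * X = smult (of_nat n) ((monom 1 k * M) * X) + M * X"
    by (simp add: mult.assoc)
  also have "cg Q \<dots> (smult (of_nat n) (M * X) + M * X)"
    by (intro cg_add cg_smult cg_mult_right assms cg_refl)
  also have "smult (of_nat n) (M * X) + M * X = smult (of_nat (Suc n)) (M * X)"
    by (simp add: smult_add_left)
  finally show ?case .
qed

lemma dvd_smult_nat: fixes A :: "'f::field_char_0 poly"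
  assumes "Q dvd smult (of_nat n) A" "n > 0" shows "Q dvd A"
proof -
  have "A = smult (1 / of_nat n) (smult (of_nat n) A)" using assms(2) by simp
  then show ?thesis using assms(1) by (metis dvd_smult)
qed

lemma alg_main:
  fixes Rp Sp :: "'f::field_char_0 poly"
  assumes gK: "goodK p K" and pr: "prime p" and ip: "i \<le> p - 2" and k0: "0 < k" and kN: "k < p*p"
    and R: "KP K Rp" and S: "KP K Sp"
    and Xp: "Xp = (\<Sum>l<k. monom 1 l * smult (1 / of_nat (p*p)) (PhiP 1 p * PhiP p p))
               + Rp * (YY * PhiP p p) + Sp * (PhiP 1 p + YY^(i+1))"
    and dv: "QQ (p*p) dvd Cs k Xp n" and n0: "n > 0"
  shows False
proof -
  define Q where "Q = (QQ (p*p) :: 'f poly)"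
  define \<Phi>1 where "\<Phi>1 = (PhiP 1 p :: 'f poly)"
  define \<Phi>p where "\<Phi>p = (PhiP p p :: 'f poly)"
  define \<Sigma> where "\<Sigma> = \<Phi>1 * \<Phi>p"
  define S1 where "S1 = poly Sp 1"
  have p2: "p \<ge> 2" using prime_ge_2_nat[OF pr] .
  have N0: "p * p > 0" using p2 by simp
  have pf: "(of_nat p :: 'f) \<noteq> 0" using p2 by simp
  have evS: "ev (p*p) \<Sigma> 0 = 1" unfolding \<Sigma>_def \<Phi>1_def \<Phi>p_def L6 using L7[OF N0] .
  have sm0: "c = 0" if "Q dvd smult c \<Sigma>" for c
  proof -
    have "ev (p*p) (smult c \<Sigma>) 0 = 0" using dvd_ev0[OF N0] that unfolding Q_def by blast
    then show ?thesis using evS by (simp add: ev_smult)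
  qed
  have CsQ: "cg Q (M * Cs k Xp n) 0" for M
    using dv unfolding Q_def cg_def by simp
  have "cg Q (\<Sigma> * Cs k Xp n) (smult (of_nat n) (\<Sigma> * Xp))"
    by (rule Cs_cg) (unfold Q_def \<Sigma>_def \<Phi>1_def \<Phi>p_def, rule L2)
  then have "cg Q (smult (of_nat n) (\<Sigma> * Xp)) 0" using CsQ[of \<Sigma>] cg_sym cg_trans by blast
  then have "Q dvd \<Sigma> * Xp" using dvd_smult_nat[OF _ n0] cg_0_dvd by blast
  then have "cg Q (\<Sigma> * Xp) 0" by (rule cg_dvd)
  moreover have "cg Q (\<Sigma> * Xp) (smult (poly Xp 1) \<Sigma>)"
    unfolding Q_def \<Sigma>_def \<Phi>1_def \<Phi>p_def by (rule L5)
  ultimately have "cg Q (smult (poly Xp 1) \<Sigma>) 0" using cg_sym cg_trans by blast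
  then have px: "poly Xp 1 = 0" using sm0 cg_0_dvd by blast
  have "poly Xp 1 = of_nat k + of_nat p * S1"
    using pf by (simp add: Xp L8 poly_sum poly_monom S1_def YY_pCons)
  then have kS: "of_nat k = of_nat p * (- S1)" using px by (simp add: eq_neg_iff_add_eq_0)
  have "p dvd k" by (rule Kint[OF gK KP_poly1[OF gK S, folded S1_def, THEN Kneg[OF gK]] kS])
  then obtain u where u: "k = p * u" by blast
  have u0: "0 < u" "u < p" using k0 kN u by auto
  have "of_nat p * (of_nat u :: 'f) = of_nat p * (- S1)" using kS unfolding u by simp
  then have "(of_nat u :: 'f) = - S1" using pf mult_left_cancel by blast
  then have S1u: "S1 = - of_nat u" by simp
  have "cg Q (\<Phi>p * Cs k Xp n) (smult (of_nat n) (\<Phi>p * Xp))"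
    by (rule Cs_cg) (unfold Q_def \<Phi>p_def u, rule L3)
  then have "cg Q (smult (of_nat n) (\<Phi>p * Xp)) 0" using CsQ[of \<Phi>p] cg_sym cg_trans by blast
  then have "Q dvd \<Phi>p * Xp" using dvd_smult_nat[OF _ n0] cg_0_dvd by blast
  then have dj: "Q dvd YY^(p-2-i) * (\<Phi>p * Xp)" by simp
  obtain c where hc: "(YY::'f poly)^(p-1) = \<Phi>1 - smult (of_nat p) (\<Sum>l<p. monom (of_int (c l)) l)"
    using Ypow[OF pr] unfolding \<Phi>1_def by blast
  define h where "h = (\<Sum>l<p. monom (of_int (c l)) l :: 'f poly)"
  have KPh: "KP K h" unfolding h_def by (intro KP_sum[OF gK] KP_monom[OF gK] Kint'[OF gK])
  define j where "j = p - 2 - i"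
  have jp: "j + (i+1) = p - 1" using ip p2 by (simp add: j_def)
  define T1 where "T1 = (\<Sum>l<k. monom 1 l * smult (1/of_nat(p*p)) (\<Phi>p * \<Sigma>))"
  have e1: "\<Phi>p * Xp = T1 + Rp*YY*(\<Phi>p*\<Phi>p) + Sp*\<Sigma> + Sp*\<Phi>p*YY^(i+1)"
    unfolding Xp T1_def \<Sigma>_def \<Phi>1_def \<Phi>p_def by (simp add: algebra_simps sum_distrib_left)
  have pS: "cg Q (\<Phi>p * \<Sigma>) (smult (of_nat p) \<Sigma>)"
  proof -
    have "\<Phi>p * \<Sigma> = (\<Phi>p * \<Phi>p) * \<Phi>1" unfolding \<Sigma>_def by (simp add: mult_ac)
    also have "cg Q \<dots> (smult (of_nat p) \<Phi>p * \<Phi>1)"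
      by (rule cg_mult_right) (unfold Q_def \<Phi>p_def, rule L4)
    also have "smult (of_nat p) \<Phi>p * \<Phi>1 = smult (of_nat p) \<Sigma>" unfolding \<Sigma>_def by (simp add: mult_ac)
    finally show ?thesis .
  qed
  have c1: "cg Q T1 (smult (of_nat u) \<Sigma>)"
  proof -
    have "cg Q T1 (\<Sum>l<k. monom 1 l * smult (1/of_nat(p*p)) (smult (of_nat p) \<Sigma>))"
      unfolding T1_def by (intro cg_sum cg_mult_left cg_smult pS)
    also have "(\<Sum>l<k. monom 1 l * smult (1/of_nat(p*p)) (smult (of_nat p) \<Sigma>)) = (\<Sum>l<k. smult (1/of_nat p) (monom 1 l * \<Sigma>))"
      using pf by (intro sum.cong refl) (simp add: mult_smult_right)
    also have "cg Q \<dots> (\<Sum>l<k. smult (1/of_nat p) \<Sigma>)"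
      by (intro cg_sum cg_smult) (unfold Q_def \<Sigma>_def \<Phi>1_def \<Phi>p_def, rule L2)
    also have "(\<Sum>l<k. smult (1/of_nat p) \<Sigma>) = smult (of_nat u) \<Sigma>"
    proof -
      have "(\<Sum>l<k. smult (1/of_nat p) \<Sigma>) = smult (\<Sum>l<k. 1/of_nat p) \<Sigma>" by (simp only: smult_sum)
      also have "(\<Sum>l<k. (1::'f)/of_nat p) = of_nat u" using pf by (simp add: u)
      finally show ?thesis .
    qed
    finally show ?thesis .
  qed
  have c2: "cg Q (Rp*YY*(\<Phi>p*\<Phi>p)) (Rp*YY*smult (of_nat p) \<Phi>p)"
    by (rule cg_mult_left) (unfold Q_def \<Phi>p_def, rule L4)
  have c3: "cg Q (\<Phi>p * Xp) (smult (of_nat u) \<Sigma> + Rp*YY*smult (of_nat p) \<Phi>p + Sp*\<Sigma> + Sp*\<Phi>p*YY^(i+1))"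
    unfolding e1 by (intro cg_add c1 c2 cg_refl)
  define W where "W = YY^(j+1)*Rp*\<Phi>p - Sp*\<Phi>p*h"
  have e2: "YY^j * (smult (of_nat u) \<Sigma> + Rp*YY*smult (of_nat p) \<Phi>p + Sp*\<Sigma> + Sp*\<Phi>p*YY^(i+1))
      = \<Sigma>*(YY^j*(Sp + [:of_nat u:])) + \<Sigma>*Sp + smult (of_nat p) W"
  proof -
    have a: "YY^j * (Sp*\<Phi>p*YY^(i+1)) = Sp*\<Phi>p*(\<Phi>1 - smult (of_nat p) h)"
    proof -
      have b: "YY^j * YY^(i+1) = (YY::'f poly)^(p-1)" by (simp only: power_add[symmetric] jp)
      have "YY^j * (Sp*\<Phi>p*YY^(i+1)) = Sp*\<Phi>p*(YY^j * YY^(i+1))" by (simp only: mult_ac)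
      also have "\<dots> = Sp*\<Phi>p*(\<Phi>1 - smult (of_nat p) h)" by (simp only: b hc h_def)
      finally show ?thesis .
    qed
    define Z where "Z = (YY::'f poly)^j"
    define Y1 where "Y1 = (YY::'f poly)"
    have W': "W = Z*Y1*Rp*\<Phi>p - Sp*\<Phi>p*h" unfolding W_def Z_def Y1_def by (simp add: mult_ac)
    have "YY^j * (smult (of_nat u) \<Sigma> + Rp*YY*smult (of_nat p) \<Phi>p + Sp*\<Sigma> + Sp*\<Phi>p*YY^(i+1))
       = Z * (smult (of_nat u) \<Sigma> + Rp*Y1*smult (of_nat p) \<Phi>p + Sp*\<Sigma>) + YY^j * (Sp*\<Phi>p*YY^(i+1))"
      unfolding Z_def Y1_def by (simp only: distrib_left)
    also have "\<dots> = Z * (smult (of_nat u) \<Sigma> + Rp*Y1*smult (of_nat p) \<Phi>p + Sp*\<Sigma>) + Sp*\<Phi>p*(\<Phi>1 - smult (of_nat p) h)"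
      by (simp only: a)
    also have "\<dots> = \<Sigma>*(Z*(Sp + [:of_nat u:])) + \<Sigma>*Sp + smult (of_nat p) W"
      unfolding W' \<Sigma>_def by (simp add: algebra_simps smult_diff_right)
    finally show ?thesis unfolding Z_def .
  qed
  have c5: "cg Q (\<Sigma>*(YY^j*(Sp + [:of_nat u:]))) 0"
  proof -
    have "cg Q (\<Sigma>*(YY^j*(Sp + [:of_nat u:]))) (smult (poly (YY^j*(Sp + [:of_nat u:])) 1) \<Sigma>)"
      unfolding Q_def \<Sigma>_def \<Phi>1_def \<Phi>p_def by (rule L5)
    also have "poly (YY^j*(Sp + [:of_nat u:])) 1 = 0"
      using S1u by (simp add: S1_def)
    finally show ?thesis by simp
  qed
  have c6: "cg Q (\<Sigma>*Sp) (smult S1 \<Sigma>)"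
    unfolding Q_def \<Sigma>_def \<Phi>1_def \<Phi>p_def S1_def by (rule L5)
  have "cg Q (YY^j * (\<Phi>p * Xp)) (YY^j * (smult (of_nat u) \<Sigma> + Rp*YY*smult (of_nat p) \<Phi>p + Sp*\<Sigma> + Sp*\<Phi>p*YY^(i+1)))"
    by (rule cg_mult_left[OF c3])
  also note e2
  also have "cg Q (\<Sigma>*(YY^j*(Sp + [:of_nat u:])) + \<Sigma>*Sp + smult (of_nat p) W) (0 + smult S1 \<Sigma> + smult (of_nat p) W)"
    by (intro cg_add c5 c6 cg_refl)
  finally have "cg Q (YY^j * (\<Phi>p * Xp)) (smult S1 \<Sigma> + smult (of_nat p) W)" by simp
  moreover have "cg Q (YY^j * (\<Phi>p * Xp)) 0" using dj unfolding j_def by (rule cg_dvd)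
  ultimately have "cg Q (smult S1 \<Sigma> + smult (of_nat p) W) 0" using cg_sym cg_trans by blast
  then have "ev (p*p) (smult S1 \<Sigma> + smult (of_nat p) W) 0 = 0"
    using dvd_ev0[OF N0] cg_0_dvd unfolding Q_def by blast
  then have "S1 + of_nat p * ev (p*p) W 0 = 0" by (simp add: ev_add ev_smult evS)
  then have "of_nat u = of_nat p * ev (p*p) W 0" using S1u by simp
  moreover have "KP K W" unfolding W_def \<Phi>p_def
    by (intro KP_diff[OF gK] KP_mult[OF gK] KP_pow[OF gK] KP_monom[OF gK K1[OF gK]] KP_1[OF gK] KP_PhiP[OF gK] R S KPh)
  ultimately have "p dvd u" using Kint[OF gK] KP_ev[OF gK] by blast
  then show False using u0 by (auto dest: dvd_imp_le)
qed


lemma Zloc_char: assumes "prime p"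
  shows "q \<in> Zloc p \<longleftrightarrow> (\<exists>a b. b > 0 \<and> \<not> int p dvd b \<and> q = of_int a / of_int b)"
proof
  assume "q \<in> Zloc p"
  obtain a b where ab: "quotient_of q = (a, b)" by (cases "quotient_of q")
  then show "\<exists>a b. b > 0 \<and> \<not> int p dvd b \<and> q = of_int a / of_int b"
    using \<open>q \<in> Zloc p\<close> quotient_of_denom_pos[OF ab] quotient_of_div[OF ab]
    unfolding Zloc_def by auto
next
  assume "\<exists>a b. b > 0 \<and> \<not> int p dvd b \<and> q = of_int a / of_int b"
  then obtain a b where b: "b > 0" "\<not> int p dvd b" and q: "q = of_int a / of_int b" by blast
  obtain n d where nd: "quotient_of q = (n, d)" by (cases "quotient_of q")
  have d0: "d > 0" using quotient_of_denom_pos[OF nd] .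
  have cop: "coprime n d" using quotient_of_coprime[OF nd] .
  have "of_int n / of_int d = (of_int a / of_int b :: rat)" using quotient_of_div[OF nd] q by simp
  then have "of_int (n * b) = (of_int (a * d) :: rat)" using b d0 by (simp add: field_simps)
  then have "n * b = a * d" by (simp only: of_int_eq_iff)
  then have "d dvd n * b" by simp
  then have "d dvd b" using cop by (metis coprime_commute coprime_dvd_mult_right_iff coprime_dvd_mult_left_iff)
  then have "\<not> int p dvd d" using b(2) dvd_trans by blast
  then show "q \<in> Zloc p" unfolding Zloc_def using nd by simp
qed

lemma goodK_Zloc: assumes pr: "prime p"
  shows "goodK p (of_rat ` Zloc p :: 'f::field_char_0 set)"
proof -
  have pi: "prime (int p)" using pr by simp
  note Z = Zloc_char[OF pr]
  have z1: "1 \<in> Zloc p" unfolding Z using pr by (intro exI[of _ 1]) (auto simp: prime_gt_1_nat)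
  have zadd: "x + y \<in> Zloc p \<and> x * y \<in> Zloc p" if xy: "x \<in> Zloc p" "y \<in> Zloc p" for x y
  proof -
    obtain a b where ab: "b > 0" "\<not> int p dvd b" "x = of_int a / of_int b" using xy(1) unfolding Z by blast
    obtain c d where cd: "d > 0" "\<not> int p dvd d" "y = of_int c / of_int d" using xy(2) unfolding Z by blast
    have bd: "b * d > 0" "\<not> int p dvd b * d" using ab cd pi by (auto simp: prime_dvd_mult_iff)
    have "x + y = of_int (a * d + c * b) / of_int (b * d)" using ab cd by (simp add: field_simps)
    moreover have "x * y = of_int (a * c) / of_int (b * d)" using ab cd by (simp add: field_simps)
    ultimately show ?thesis unfolding Z using bd by blast
  qed
  have zneg: "- x \<in> Zloc p" if xz: "x \<in> Zloc p" for x
  proof -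
    obtain a b where ab: "b > 0" "\<not> int p dvd b" "x = of_int a / of_int b" using xz unfolding Z by blast
    have "- x = of_int (- a) / of_int b" using ab by simp
    then show ?thesis unfolding Z using ab by blast
  qed
  have zint: "p dvd c" if qc: "q \<in> Zloc p" "(of_nat c :: 'f) = of_nat p * of_rat q" for c q
  proof -
    have "(of_rat (of_nat c) :: 'f) = of_rat (of_nat p * q)" using qc(2) by (simp add: of_rat_mult)
    then have cq: "of_nat c = of_nat p * q" by (simp only: of_rat_eq_iff)
    obtain a b where ab: "b > 0" "\<not> int p dvd b" "q = of_int a / of_int b" using qc(1) unfolding Z by blast
    have "(of_int (int c * b) :: rat) = of_int (int p * a)" using cq ab by (simp add: field_simps)
    then have "int c * b = int p * a" by (simp only: of_int_eq_iff)
    then have "int p dvd int c * b" by (metis dvd_triv_left)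
    then have "int p dvd int c" using ab(2) pi by (simp add: prime_dvd_mult_iff)
    then show ?thesis by simp
  qed
  show ?thesis unfolding goodK_def
  proof (intro conjI ballI allI impI)
    show "1 \<in> (of_rat ` Zloc p :: 'f set)" using z1 by (metis image_eqI of_rat_1)
  next
    fix a b :: 'f assume "a \<in> of_rat ` Zloc p" "b \<in> of_rat ` Zloc p"
    then obtain x y where "x \<in> Zloc p" "y \<in> Zloc p" "a = of_rat x" "b = of_rat y" by blast
    then show "a + b \<in> of_rat ` Zloc p" "a * b \<in> of_rat ` Zloc p"
      using zadd by (auto simp: of_rat_add[symmetric] of_rat_mult[symmetric])
  next
    fix a :: 'f assume "a \<in> of_rat ` Zloc p"
    then obtain x where "x \<in> Zloc p" "a = of_rat x" by blast
    then show "- a \<in> of_rat ` Zloc p" using zneg by (auto simp: of_rat_minus[symmetric])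
  next
    fix c and \<kappa> :: 'f assume "\<kappa> \<in> of_rat ` Zloc p" "of_nat c = of_nat p * \<kappa>"
    then show "p dvd c" using zint by blast
  qed
qed

lemma padic_op_closed:
  assumes p: "p > 0" and x: "x \<in> padic_ints p" and y: "y \<in> padic_ints p"
    and f: "\<And>a b m. f (a mod m) (b mod m) mod m = f a b mod (m::int)"
  shows "(\<lambda>n. f (x n) (y n) mod int p ^ n) \<in> padic_ints p"
  unfolding padic_ints_def
proof (intro CollectI allI conjI)
  fix n
  have pp: "int p ^ n > 0" using p by simp
  show "0 \<le> f (x n) (y n) mod int p ^ n" "f (x n) (y n) mod int p ^ n < int p ^ n" using pp by auto
  have d: "int p ^ n dvd int p ^ Suc n" by (simp add: le_imp_power_dvd)
  have "f (x (Suc n)) (y (Suc n)) mod int p ^ Suc n mod int p ^ n = f (x (Suc n)) (y (Suc n)) mod int p ^ n"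
    using d by (simp add: mod_mod_cancel)
  also have "\<dots> = f (x (Suc n) mod int p ^ n) (y (Suc n) mod int p ^ n) mod int p ^ n" by (simp add: f)
  also have "\<dots> = f (x n) (y n) mod int p ^ n" using x y unfolding padic_ints_def by (metis (mono_tags, lifting) mem_Collect_eq)
  finally show "f (x n) (y n) mod int p ^ n = f (x (Suc n)) (y (Suc n)) mod int p ^ Suc n mod int p ^ n" by simp
qed

lemma goodK_padic: assumes pr: "prime p" and emb: "padic_embedding p \<phi>"
  shows "goodK p (\<phi> ` padic_ints p :: 'f::field set)"
proof -
  define P where "P = padic_ints p"
  have p0: "p > 0" using pr prime_gt_0_nat by blast
  have inj: "inj_on \<phi> P" and one: "\<phi> (pone p) = 1"
    and hom: "\<And>x y. x \<in> P \<Longrightarrow> y \<in> P \<Longrightarrow> \<phi> (padd p x y) = \<phi> x + \<phi> y \<and> \<phi> (pmult p x y) = \<phi> x * \<phi> y"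
    using emb unfolding padic_embedding_def P_def by auto
  have addP: "padd p x y \<in> P" if "x \<in> P" "y \<in> P" for x y
    unfolding padd_def P_def by (rule padic_op_closed[OF p0]) (use that in \<open>auto simp: P_def mod_add_eq\<close>)
  have multP: "pmult p x y \<in> P" if "x \<in> P" "y \<in> P" for x y
    unfolding pmult_def P_def by (rule padic_op_closed[OF p0]) (use that in \<open>auto simp: P_def mod_mult_eq\<close>)
  define iota where "iota c = (\<lambda>n. int c mod int p ^ n)" for c :: nat
  have iotaP: "iota c \<in> P" for c
    unfolding P_def padic_ints_def iota_def
  proof (intro CollectI allI conjI)
    fix n
    have pp: "int p ^ n > 0" using p0 by simp
    show "0 \<le> int c mod int p ^ n" "int c mod int p ^ n < int p ^ n" using pp by auto
    have d: "int p ^ n dvd int p ^ Suc n" by (simp add: le_imp_power_dvd)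
    then show "int c mod int p ^ n = int c mod int p ^ Suc n mod int p ^ n" by (simp add: mod_mod_cancel)
  qed
  have i0: "iota 0 = (\<lambda>_. 0)" by (simp add: iota_def)
  have phi0: "\<phi> (iota 0) = 0"
  proof -
    have e: "padd p (iota 0) (iota 0) = iota 0" by (simp add: padd_def i0)
    have h: "\<phi> (padd p (iota 0) (iota 0)) = \<phi> (iota 0) + \<phi> (iota 0)" using hom[OF iotaP iotaP] by blast
    have "\<phi> (iota 0) + 0 = \<phi> (iota 0) + \<phi> (iota 0)" using h[unfolded e] by (simp only: add_0_right)
    then show ?thesis by (simp only: add_left_cancel)
  qed
  have pone: "pone p = iota 1" by (simp add: pone_def iota_def)
  have iS: "iota (Suc c) = padd p (iota c) (iota 1)" for c
    by (rule ext) (simp add: iota_def padd_def mod_add_eq add.commute[of 1])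
  have phin: "\<phi> (iota c) = of_nat c" for c
  proof (induction c)
    case 0 then show ?case by (simp add: phi0)
  next
    case (Suc c)
    have "\<phi> (iota (Suc c)) = \<phi> (iota c) + \<phi> (iota 1)" unfolding iS using hom[OF iotaP iotaP] by blast
    also have "\<phi> (iota 1) = 1" using one unfolding pone .
    finally show ?case using Suc by simp
  qed
  define pneg where "pneg x = (\<lambda>n. (- x n) mod int p ^ n)" for x :: "nat \<Rightarrow> int"
  have negP: "pneg x \<in> P" if "x \<in> P" for x
  proof -
    have "(\<lambda>n. (\<lambda>a b. - a) (x n) (x n) mod int p ^ n) \<in> padic_ints p"
      by (rule padic_op_closed[OF p0]) (use that in \<open>auto simp: P_def mod_minus_eq\<close>)
    then show ?thesis by (simp add: pneg_def P_def)
  qed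
  have negphi: "\<phi> x + \<phi> (pneg x) = 0" if "x \<in> P" for x
  proof -
    have "padd p x (pneg x) = iota 0" by (simp add: padd_def pneg_def i0 mod_add_right_eq)
    then show ?thesis using hom[OF that negP[OF that]] phi0 by simp
  qed
  show ?thesis unfolding goodK_def P_def[symmetric]
  proof (intro conjI ballI allI impI)
    show "1 \<in> \<phi> ` P" using one iotaP[of 1] unfolding pone by (intro image_eqI[of _ _ "iota 1"]) auto
  next
    fix a b :: 'f assume "a \<in> \<phi> ` P" "b \<in> \<phi> ` P"
    then obtain x y where "x \<in> P" "y \<in> P" "a = \<phi> x" "b = \<phi> y" by blast
    moreover have "a + b = \<phi> (padd p x y)" "a * b = \<phi> (pmult p x y)" using hom[of x y] calculation by simp_all
    ultimately show "a + b \<in> \<phi> ` P" "a * b \<in> \<phi> ` P"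
      using addP[of x y] multP[of x y] by blast+
  next
    fix a :: 'f assume "a \<in> \<phi> ` P"
    then obtain x where "x \<in> P" "a = \<phi> x" by blast
    then have "- a = \<phi> (pneg x)" using negphi[of x] by (simp add: add_eq_0_iff)
    then show "- a \<in> \<phi> ` P" using negP \<open>x \<in> P\<close> by blast
  next
    fix c and \<kappa> :: 'f assume k: "\<kappa> \<in> \<phi> ` P" "of_nat c = of_nat p * \<kappa>"
    then obtain z where z: "z \<in> P" "\<kappa> = \<phi> z" by blast
    have "\<phi> (pmult p (iota p) z) = \<phi> (iota p) * \<phi> z" using hom[OF iotaP z(1)] by blast
    also have "\<dots> = \<phi> (iota c)" unfolding phin using k(2) z(2) by simp
    finally have "\<phi> (iota c) = \<phi> (pmult p (iota p) z)" by simp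
    then have "iota c = pmult p (iota p) z" using inj iotaP multP[OF iotaP z(1)] by (meson inj_onD)
    then have "iota c 1 = pmult p (iota p) z 1" by simp
    then have "int c mod int p = 0" by (simp add: iota_def pmult_def)
    then have "int p dvd int c" by (simp add: dvd_eq_mod_eq_0)
    then show "p dvd c" by simp
  qed
qed


lemma ev_conv_fun: "N > 0 \<Longrightarrow> conv N (ev N A) (ev N B) = ev N (A * B)"
  by (rule ext) (rule ev_mult)

lemma ev_grp: "grp N k = ev N (monom 1 k)"
  by (rule ext) (simp add: ev_monom)

lemma a_minus_1_ev: "a_minus_1 N = ev N YY"
  by (rule ext) (simp add: a_minus_1_def ev_diff ev_monom ev_1)

lemma Phi_a_ev: "Phi_a p = ev (p^2) (PhiP 1 p)"
  by (rule ext) (simp add: Phi_a_def PhiP_def ev_sum ev_monom)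

lemma Phi_ap_ev: "Phi_ap p = ev (p^2) (PhiP p p)"
  by (rule ext) (simp add: Phi_ap_def PhiP_def ev_sum ev_monom)

lemma cpow_ev: "N > 0 \<Longrightarrow> cpow N (ev N A) n = ev N (A ^ n)"
proof (induction n)
  case 0 then show ?case by (simp add: ev_1[symmetric] fun_eq_iff)
next
  case (Suc n) then show ?case by (simp add: ev_conv_fun)
qed

lemma act_ev: "N > 0 \<Longrightarrow> act N k (ev N A) = ev N (monom 1 k * A)"
  by (simp add: act_def ev_grp ev_conv_fun)

lemma T_a_ev: assumes "p > 0"
  shows "(T_a p :: nat \<Rightarrow> 'f::field) = ev (p^2) (smult (1 / of_nat (p*p)) (PhiP 1 p * PhiP p p))"
proof (rule ext)
  fix j
  have "T_a p j = conv (p^2) (ev (p^2) (PhiP 1 p)) (ev (p^2) (PhiP p p)) j / (of_nat p)^2"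
    by (simp add: T_a_def Phi_a_ev Phi_ap_ev)
  also have "\<dots> = ev (p^2) (PhiP 1 p * PhiP p p) j / (of_nat p)^2"
    using assms by (simp add: ev_conv_fun)
  also have "\<dots> = ev (p^2) (smult (1 / of_nat (p*p)) (PhiP 1 p * PhiP p p)) j"
    by (simp add: ev_smult power2_eq_square)
  finally show "(T_a p j :: 'f) = ev (p^2) (smult (1 / of_nat (p*p)) (PhiP 1 p * PhiP p p)) j" .
qed

lemma T_val_ev: assumes "p > 0"
  shows "(T_val p k :: nat \<Rightarrow> 'f::field) =
     ev (p^2) (\<Sum>l<k. monom 1 l * smult (1 / of_nat (p*p)) (PhiP 1 p * PhiP p p))"
  using assms by (simp add: fun_eq_iff T_val_def T_a_ev act_ev ev_sum)

definition Rpoly :: "nat \<Rightarrow> (nat \<Rightarrow> 'f::comm_ring_1) \<Rightarrow> 'f poly" where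
  "Rpoly N r = (\<Sum>j<N. monom (r j) j)"

lemma Rpoly_ev: assumes "\<forall>j\<ge>N. r j = 0" shows "ev N (Rpoly N r) = r"
proof (rule ext)
  fix j
  have "ev N (Rpoly N r) j = (\<Sum>l<N. r l * grp N l j)" by (simp add: Rpoly_def ev_sum ev_monom)
  also have "\<dots> = r j"
  proof (cases "j < N")
    case True
    have "(\<Sum>l<N. r l * grp N l j) = (\<Sum>l<N. if l = j then r l else 0)"
      by (rule sum.cong) (auto simp: grp_def)
    then show ?thesis using True by simp
  next
    case False
    then have "(\<Sum>l<N. r l * grp N l j) = 0" by (intro sum.neutral) (auto simp: grp_def)
    then show ?thesis using False assms by simp
  qed
  finally show "ev N (Rpoly N r) j = r j" .
qed

lemma crys_pow_ev: assumes "N > 0"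
  shows "crys_pow N (k, ev N X) n = (n * k mod N, ev N (Cs k X n))"
proof (induction n)
  case 0 then show ?case by (simp add: fun_eq_iff ev_0)
next
  case (Suc n)
  show ?case using assms
    by (simp add: Suc crys_mult_def act_ev fun_eq_iff ev_add mod_add_right_eq add.commute)
qed


theorem lemma8:
  fixes p :: nat and i :: nat and K :: "'f::field_char_0 set"
  assumes "prime p"
    and "K = of_rat ` Zloc p \<or> (\<exists>\<phi>. padic_embedding p \<phi> \<and> K = \<phi> ` padic_ints p)"
    and "i \<le> p - 2"
  shows "torsion_free_crys (p^2) (crys (p^2) (X_mod p K i) (T_val p))"
proof -
  have gK: "goodK p K" using assms(2) goodK_Zloc[OF assms(1)] goodK_padic[OF assms(1)] by blast
  define N where "N = p^2"
  have p0: "p > 0" using assms(1) prime_gt_0_nat by blast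
  have N0: "N > 0" using p0 by (simp add: N_def)
  have Npp: "N = p * p" by (simp add: N_def power2_eq_square)
  show ?thesis unfolding torsion_free_crys_def N_def[symmetric]
  proof (intro ballI allI impI)
    fix e and n :: nat
    assume eS: "e \<in> crys N (X_mod p K i) (T_val p)" and n0: "0 < n" and cp: "crys_pow N e n = (0, \<lambda>_. 0)"
    obtain k x where e: "e = (k, x)" by (cases e)
    have kN: "k < N" and xm: "(\<lambda>j. x j - T_val p k j) \<in> X_mod p K i"
      using eS unfolding e crys_def by auto
    define U :: "nat \<Rightarrow> 'f" where "U = conv N (a_minus_1 N) (Phi_ap p)"
    define V :: "nat \<Rightarrow> 'f" where "V = (\<lambda>j. Phi_a p j + cpow N (a_minus_1 N) (i + 1) j)"
    obtain r s where r: "r \<in> grp_alg N K" and s: "s \<in> grp_alg N K"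
      and eqn: "(\<lambda>j. x j - T_val p k j) = (\<lambda>j. conv N r U j + conv N s V j)"
      using xm unfolding X_mod_def gen_submodule_def N_def[symmetric] U_def V_def by blast
    define Rp where "Rp = Rpoly N r"
    define Sp where "Sp = Rpoly N s"
    have rR: "r = ev N Rp" unfolding Rp_def using r unfolding grp_alg_def by (intro Rpoly_ev[symmetric]) blast
    have sS: "s = ev N Sp" unfolding Sp_def using s unfolding grp_alg_def by (intro Rpoly_ev[symmetric]) blast
    have KR: "KP K Rp" using r unfolding Rp_def Rpoly_def grp_alg_def
      by (intro KP_sum[OF gK] KP_monom[OF gK]) auto
    have KS: "KP K Sp" using s unfolding Sp_def Rpoly_def grp_alg_def
      by (intro KP_sum[OF gK] KP_monom[OF gK]) auto
    have U': "U = ev N (YY * PhiP p p)"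
      unfolding U_def a_minus_1_ev Phi_ap_ev N_def[symmetric] using N0 by (simp add: ev_conv_fun)
    have V': "V = ev N (PhiP 1 p + YY^(i+1))"
      unfolding V_def a_minus_1_ev Phi_a_ev N_def[symmetric] using N0 by (simp add: cpow_ev fun_eq_iff ev_add ev_mult)
    define Xp :: "'f poly" where "Xp = (\<Sum>l<k. monom 1 l * smult (1 / of_nat (p*p)) (PhiP 1 p * PhiP p p))
               + Rp * (YY * PhiP p p) + Sp * (PhiP 1 p + YY^(i+1))"
    have xX: "x = ev N Xp"
    proof (rule ext)
      fix j
      have "x j = T_val p k j + conv N r U j + conv N s V j" using fun_cong[OF eqn, of j] by (simp add: algebra_simps)
      also have "\<dots> = ev N Xp j"
      proof -
        have t: "T_val p k j = ev N (\<Sum>l<k. monom 1 l * smult (1 / of_nat (p*p)) (PhiP 1 p * PhiP p p)) j"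
          unfolding N_def T_val_ev[OF p0] by (rule refl)
        have c1: "conv N r U j = ev N (Rp * (YY * PhiP p p)) j" unfolding rR U' by (rule ev_mult[OF N0])
        have c2: "conv N s V j = ev N (Sp * (PhiP 1 p + YY^(i+1))) j" unfolding sS V' by (rule ev_mult[OF N0])
        show ?thesis unfolding t c1 c2 Xp_def ev_add ..
      qed
      finally show "x j = ev N Xp j" .
    qed
    have "crys_pow N e n = (n * k mod N, ev N (Cs k Xp n))" unfolding e xX by (rule crys_pow_ev[OF N0])
    then have "ev N (Cs k Xp n) = (\<lambda>_. 0)" using cp by simp
    then have dv: "QQ N dvd Cs k Xp n" by (intro ev0_dvd[OF N0]) simp
    show "e = (0, \<lambda>_. 0)"
    proof (cases "k = 0")
      case True
      have "cg (QQ N) (1 * Cs k Xp n) (smult (of_nat n) (1 * Xp))"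
        by (rule Cs_cg) (simp add: True cg_refl monom_0 one_pCons)
      then have "cg (QQ N) (smult (of_nat n) Xp) 0" using cg_trans[OF cg_sym cg_dvd[OF dv]] by simp
      then have "QQ N dvd Xp" using dvd_smult_nat[OF _ n0] cg_0_dvd by blast
      then have "x = (\<lambda>_. 0)" unfolding xX using dvd_ev0[OF N0] by blast
      then show ?thesis using e True by simp
    next
      case False
      have "0 < k" using False by simp
      moreover have "k < p * p" using kN Npp by simp
      moreover have "QQ (p*p) dvd Cs k Xp n" using dv Npp by simp
      ultimately have False by (rule alg_main[OF gK assms(1) assms(3) _ _ KR KS Xp_def _ n0])
      then show ?thesis ..
    qed
  qed
qed

end
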